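(* In the i.i.d. setting below, assume [B1], [B2], [B3] and [B5]. Then, as $n\to\infty$, $$P\Big(\min_{a\in\mathbb A}\sum_{i\in\mathbb G^0}1_{\{X^i\in a\}}Y^i_\tau>n^{1-\bar d\theta-\delta'}\Big)\to1\quad\text{and}\quad P\Big(\max_{a\in\mathbb A}\sum_{i\in\mathbb G^1}1_{\{X^i\in a\}}<n^{1-\bar d\theta-\delta}\Big)\to1$$ for any constants $0<\delta'<\delta<(1-\bar d\theta)\wedge(1-\beta)$. Consequently $P\big[\inf_{i\in G^1}\sum_{j\in G^0}1_{\{X^j\in a^i\}}Y^j_\tau=0\big]\to0$ and $\sup_{t\in[0,\tau],i\in G^0}w^i_t\to^p0$ (i.e. conditions [A3] and [A4] hold).
   Context: For each $n\in\mathbb N$, $\mathbb G=\{1,\dots,n\}$ and each $i$ has a survival time $T^i>0$, censoring time $U^i>0$, covariate $X^i\in\mathbb R^d$ and assignment $Z^i\in\{0,1\}$; the vectors $V^i=(X^i,Z^i,T^i,U^i)$, $i=1,\dots,n$, are i.i.d. for each $n$, and for each $z$ the conditional law of $(X^1,T^1,U^1)$ given $Z^1=z$ does not depend on $n$. Put $\widetilde T^i=T^i\wedge U^i$, $\mathbb G^z=\{i:Z^i=z\}$, $Y^i_t=1_{\{\widetilde T^i\ge t\}}$. Fix $\tau>0$, a compact $\mathcal X\subset\mathbb R^d$ and, for each $n$, a finite partition $\mathbb A$ of $\mathcal X$ into measurable sets; $d_n=\max_{a\in\mathbb A}\mathrm{diam}(a)$. Let $\mathcal P=\{(i,j)\in\mathbb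 G^1\times\mathbb G^0:\ X^i,X^j\in a\text{ for some }a\in\mathbb A\}$, $G^1$ (resp. $G^0$) the set of first (resp. second) coordinates of elements of $\mathcal P$. For $X^i\in\mathcal X$, $a^i$ is the cell of $\mathbb A$ containing $X^i$. $x^-=x^{-1}$ if $x\ne0$, $0^-=0$. Weights: $w^i_t=1$ if $i\in G^1$; $w^i_t=\big(\sum_{j\in\mathbb G^0}1_{\{X^j\in a^i\}}Y^j_t\big)^-\sum_{i'\in\mathbb G^1}1_{\{X^{i'}\in a^i\}}Y^{i'}_t$ if $i\in G^0$; $0$ otherwise. $a_n\lesssim b_n$ means $a_n\le Cb_n$ for a constant $C>0$ and all $n$; $a_n\asymp b_n$ means both $\lesssim$ and $\gtrsim$. [B1]: constants $\beta,\theta\in(0,1)$ and $\bar d\in\{1,\dots,d\}$ satisfy $\beta<2\theta$ and $\bar d\theta<1$. [B2]: $P(Z^1=1)\asymp n^{\beta-1}$. [B3]: the conditional law of $X^1$ given $Z^1=z$ has a density $f(\cdot\mid z)$ w.r.t. a $\sigma$-finite measure $\nu$ on $\mathbb R^d$ with $\nu(\mathcal X)<\infty$, and $\operatorname{ess\,sup}_{x\in\mathcal X}f(x\mid1)<\infty$, $\operatorname{ess\,inf}_{x\in\mathcal X}\big(f(x\mid0)E[Y^1_\tau\mid X^1=x,Z^1=0]\big)>0$ (w.r.t. $\nu$). [B5]: $d_n=O(n^{-\theta})$ and $n^{-\bar d\theta}\lesssim\min_{a\in\mathbb A}\nu(a)\le\max_{a\in\mathbb A}\nu(a)\lesssim n^{-\bar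 d\theta}$. *)

theory Defs
  imports "HOL-Probability.Probability"
begin

definition unit_law ::
  "real \<Rightarrow> ('a::euclidean_space \<times> real \<times> real) measure \<Rightarrow> ('a \<times> real \<times> real) measure
     \<Rightarrow> (bool \<times> 'a \<times> real \<times> real) measure" where
  "unit_law p Q0 Q1 =
     measure_pmf (bernoulli_pmf p) \<bind>
       (\<lambda>z. distr (if z then Q1 else Q0) (count_space UNIV \<Otimes>\<^sub>M borel) (Pair z))"

definition sample_space ::
  "nat \<Rightarrow> real \<Rightarrow> ('a::euclidean_space \<times> real \<times> real) measure \<Rightarrow> ('a \<times> real \<times> real) measure
     \<Rightarrow> (nat \<Rightarrow> bool \<times> 'a \<times> real \<times> real) measure" where
  "sample_space n p Q0 Q1 = PiM {1..n} (\<lambda>_. unit_law p Q0 Q1)"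

definition Zv :: "(nat \<Rightarrow> bool \<times> 'a \<times> real \<times> real) \<Rightarrow> nat \<Rightarrow> bool" where
  "Zv \<omega> i = fst (\<omega> i)"
definition Xv :: "(nat \<Rightarrow> bool \<times> 'a \<times> real \<times> real) \<Rightarrow> nat \<Rightarrow> 'a" where
  "Xv \<omega> i = fst (snd (\<omega> i))"
definition Tv :: "(nat \<Rightarrow> bool \<times> 'a \<times> real \<times> real) \<Rightarrow> nat \<Rightarrow> real" where
  "Tv \<omega> i = fst (snd (snd (\<omega> i)))"
definition Uv :: "(nat \<Rightarrow> bool \<times> 'a \<times> real \<times> real) \<Rightarrow> nat \<Rightarrow> real" where
  "Uv \<omega> i = snd (snd (snd (\<omega> i)))"

definition Yv :: "(nat \<Rightarrow> bool \<times> 'a \<times> real \<times> real) \<Rightarrow> nat \<Rightarrow> real \<Rightarrow> real" where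
  "Yv \<omega> i t = of_bool (t \<le> min (Tv \<omega> i) (Uv \<omega> i))"

definition grp :: "(nat \<Rightarrow> bool \<times> 'a \<times> real \<times> real) \<Rightarrow> nat \<Rightarrow> bool \<Rightarrow> nat set" where
  "grp \<omega> n z = {i \<in> {1..n}. Zv \<omega> i = z}"

definition matched_pairs ::
  "'a set set \<Rightarrow> (nat \<Rightarrow> bool \<times> 'a \<times> real \<times> real) \<Rightarrow> nat \<Rightarrow> (nat \<times> nat) set" where
  "matched_pairs A \<omega> n = {(i, j). i \<in> grp \<omega> n True \<and> j \<in> grp \<omega> n False \<and>
                            (\<exists>a\<in>A. Xv \<omega> i \<in> a \<and> Xv \<omega> j \<in> a)}"
definition G1 :: "'a set set \<Rightarrow> (nat \<Rightarrow> bool \<times> 'a \<times> real \<times> real) \<Rightarrow> nat \<Rightarrow> nat set" where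
  "G1 A \<omega> n = fst ` matched_pairs A \<omega> n"
definition G0 :: "'a set set \<Rightarrow> (nat \<Rightarrow> bool \<times> 'a \<times> real \<times> real) \<Rightarrow> nat \<Rightarrow> nat set" where
  "G0 A \<omega> n = snd ` matched_pairs A \<omega> n"

definition cell :: "'a set set \<Rightarrow> 'a \<Rightarrow> 'a set" where
  "cell A x = (THE a. a \<in> A \<and> x \<in> a)"

definition ginv :: "real \<Rightarrow> real" where
  "ginv x = (if x = 0 then 0 else 1 / x)"

definition weight ::
  "'a set set \<Rightarrow> (nat \<Rightarrow> bool \<times> 'a \<times> real \<times> real) \<Rightarrow> nat \<Rightarrow> nat \<Rightarrow> real \<Rightarrow> real" where
  "weight A \<omega> n i t =
     (if i \<in> G1 A \<omega> n then 1
      else if i \<in> G0 A \<omega> n then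
        ginv (\<Sum>j\<in>grp \<omega> n False. of_bool (Xv \<omega> j \<in> cell A (Xv \<omega> i)) * Yv \<omega> j t)
        * (\<Sum>i'\<in>grp \<omega> n True. of_bool (Xv \<omega> i' \<in> cell A (Xv \<omega> i)) * Yv \<omega> i' t)
      else 0)"

text \<open>h is a version of x |-> E[Y_tau | X = x] under the law Q of (X,T,U):
  for every Borel B, Q(X in B, min(T,U) >= tau) = integral over B of h d(law of X).\<close>
definition cond_surv_version ::
  "('a::euclidean_space \<times> real \<times> real) measure \<Rightarrow> real \<Rightarrow> ('a \<Rightarrow> real) \<Rightarrow> bool" where
  "cond_surv_version Q \<tau> h \<longleftrightarrow>
     h \<in> borel_measurable borel \<and> (\<forall>x. 0 \<le> h x \<and> h x \<le> 1) \<and>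
     (\<forall>B\<in>sets borel.
        measure Q {v \<in> space Q. fst v \<in> B \<and> \<tau> \<le> min (fst (snd v)) (snd (snd v))}
        = (\<integral>x. indicator B x * h x \<partial>(distr Q borel fst)))"

end

theory Submission
  imports Defs "HOL-Real_Asymp.Real_Asymp"
begin


lemma chernoff_lower:
  fixes N :: "'b measure" and g :: "'b \<Rightarrow> real" and I :: "'i set"
  assumes N: "prob_space N" and gm: "g \<in> borel_measurable N"
    and g01: "\<And>x. g x = 0 \<or> g x = 1" and I: "finite I"
  shows "measure (PiM I (\<lambda>_. N)) {\<omega> \<in> space (PiM I (\<lambda>_. N)). (\<Sum>i\<in>I. g (\<omega> i)) \<le> k}
     \<le> exp (k - (1 - exp (-1)) * real (card I) * (\<integral>x. g x \<partial>N))"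
proof -
  interpret N: prob_space N by (rule N)
  interpret P: product_sigma_finite "\<lambda>_. N"
    by unfold_locales
  let ?M = "PiM I (\<lambda>_. N)"
  interpret M: prob_space ?M by (rule prob_space_PiM) (rule N)
  let ?b = "1 - exp (-1::real)"
  define q where "q = (\<integral>x. g x \<partial>N)"
  have gb: "0 \<le> g x \<and> g x \<le> 1" for x using g01[of x] by auto
  have gint: "integrable N g"
    by (rule N.integrable_const_bound[where B=1]) (use gb gm in \<open>auto intro!: AE_I2\<close>)
  have eg: "exp (- g x) = 1 - ?b * g x" for x using g01[of x] by auto
  have eint: "integrable N (\<lambda>x. exp (- g x))"
    unfolding eg using gint by auto
  have iexp: "(\<integral>x. exp (- g x) \<partial>N) = 1 - ?b * q"
    unfolding eg q_def using gint by (simp add: N.prob_space)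
  have q01: "0 \<le> q \<and> q \<le> 1"
  proof -
    have "0 \<le> q" unfolding q_def by (rule integral_nonneg_AE) (use gb in \<open>auto intro!: AE_I2\<close>)
    moreover have "q \<le> (\<integral>x. 1 \<partial>N)" unfolding q_def
      by (rule integral_mono) (use gint gb in \<open>auto\<close>)
    ultimately show ?thesis by (simp add: N.prob_space)
  qed
  have bpos: "0 < ?b" "?b < 1" by auto
  let ?u = "\<lambda>\<omega>. exp k * (\<Prod>i\<in>I. exp (- g (\<omega> i)))"
  have um: "?u \<in> borel_measurable ?M" using gm by measurable
  have uint: "integrable ?M ?u"
    by (intro integrable_mult_right P.product_integrable_prod I) (use eint in auto)
  have "{\<omega> \<in> space ?M. (\<Sum>i\<in>I. g (\<omega> i)) \<le> k} = {\<omega> \<in> space ?M. ?u \<omega> \<ge> 1}"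
    using I by (auto simp: exp_sum[symmetric] exp_add[symmetric] sum_negf)
  also have "measure ?M \<dots> \<le> (\<integral>\<omega>. ?u \<omega> \<partial>?M) / 1"
    by (rule integral_Markov_inequality_measure[OF uint, where A="space ?M"]) (auto intro!: AE_I2 prod_nonneg mult_nonneg_nonneg)
  also have "(\<integral>\<omega>. ?u \<omega> \<partial>?M) = exp k * (\<Prod>i\<in>I. \<integral>x. exp (- g x) \<partial>N)"
    using P.product_integral_prod[OF I, of "\<lambda>_ x. exp (- g x)"] eint by simp
  also have "\<dots> = exp k * (1 - ?b * q) ^ card I" by (simp add: iexp)
  also have "\<dots> \<le> exp k * exp (- ?b * q) ^ card I"
  proof -
    have "0 \<le> 1 - ?b * q" using q01 bpos by (smt (verit) mult_le_one)
    moreover have "1 - ?b * q \<le> exp (- ?b * q)" using exp_ge_add_one_self[of "- ?b * q"] by (simp del: exp_ge_add_one_self add: algebra_simps)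
    ultimately show ?thesis by (intro mult_left_mono power_mono) auto
  qed
  also have "\<dots> = exp (k - ?b * real (card I) * q)"
    by (simp add: exp_of_nat_mult[symmetric] exp_add[symmetric] algebra_simps)
  finally show ?thesis unfolding q_def by simp
qed


lemma chernoff_upper:
  fixes N :: "'b measure" and g :: "'b \<Rightarrow> real" and I :: "'i set"
  assumes N: "prob_space N" and gm: "g \<in> borel_measurable N"
    and g01: "\<And>x. g x = 0 \<or> g x = 1" and I: "finite I"
  shows "measure (PiM I (\<lambda>_. N)) {\<omega> \<in> space (PiM I (\<lambda>_. N)). k \<le> (\<Sum>i\<in>I. g (\<omega> i))}
     \<le> exp (- k + (exp 1 - 1) * real (card I) * (\<integral>x. g x \<partial>N))"
proof -
  interpret N: prob_space N by (rule N)
  interpret P: product_sigma_finite "\<lambda>_. N"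
    by unfold_locales
  let ?M = "PiM I (\<lambda>_. N)"
  interpret M: prob_space ?M by (rule prob_space_PiM) (rule N)
  let ?b = "exp 1 - 1::real"
  define q where "q = (\<integral>x. g x \<partial>N)"
  have gb: "0 \<le> g x \<and> g x \<le> 1" for x using g01[of x] by auto
  have gint: "integrable N g"
    by (rule N.integrable_const_bound[where B=1]) (use gb gm in \<open>auto intro!: AE_I2\<close>)
  have eg: "exp (g x) = 1 + ?b * g x" for x using g01[of x] by auto
  have eint: "integrable N (\<lambda>x. exp (g x))"
    unfolding eg using gint by auto
  have iexp: "(\<integral>x. exp (g x) \<partial>N) = 1 + ?b * q"
    unfolding eg q_def using gint by (simp add: N.prob_space)
  have q0: "0 \<le> q" unfolding q_def by (rule integral_nonneg_AE) (use gb in \<open>auto intro!: AE_I2\<close>)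
  have bpos: "0 < ?b" by auto
  let ?u = "\<lambda>\<omega>. exp (-k) * (\<Prod>i\<in>I. exp (g (\<omega> i)))"
  have uint: "integrable ?M ?u"
    by (intro integrable_mult_right P.product_integrable_prod I) (use eint in auto)
  have "{\<omega> \<in> space ?M. k \<le> (\<Sum>i\<in>I. g (\<omega> i))} = {\<omega> \<in> space ?M. ?u \<omega> \<ge> 1}"
    using I by (auto simp: exp_sum[symmetric] exp_add[symmetric])
  also have "measure ?M \<dots> \<le> (\<integral>\<omega>. ?u \<omega> \<partial>?M) / 1"
    by (rule integral_Markov_inequality_measure[OF uint, where A="space ?M"]) (auto intro!: AE_I2 prod_nonneg mult_nonneg_nonneg)
  also have "(\<integral>\<omega>. ?u \<omega> \<partial>?M) = exp (-k) * (\<Prod>i\<in>I. \<integral>x. exp (g x) \<partial>N)"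
    using P.product_integral_prod[OF I, of "\<lambda>_ x. exp (g x)"] eint by simp
  also have "\<dots> = exp (-k) * (1 + ?b * q) ^ card I" by (simp add: iexp)
  also have "\<dots> \<le> exp (-k) * exp (?b * q) ^ card I"
  proof -
    have "0 \<le> 1 + ?b * q" using q0 bpos by simp
    moreover have "1 + ?b * q \<le> exp (?b * q)" using exp_ge_add_one_self[of "?b * q"] by (simp del: exp_ge_add_one_self add: algebra_simps)
    ultimately show ?thesis by (intro mult_left_mono power_mono) auto
  qed
  also have "\<dots> = exp (- k + ?b * real (card I) * q)"
    by (simp add: exp_of_nat_mult[symmetric] exp_add[symmetric] algebra_simps)
  finally show ?thesis unfolding q_def by simp
qed



lemma unit_law_facts:
  fixes Q0 Q1 :: "('a::euclidean_space \<times> real \<times> real) measure"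
  assumes Q0: "prob_space Q0" "sets Q0 = sets borel" and Q1: "prob_space Q1" "sets Q1 = sets borel"
    and p: "0 \<le> p" "p \<le> 1"
  shows "prob_space (unit_law p Q0 Q1)"
    and "sets (unit_law p Q0 Q1) = sets (count_space (UNIV::bool set) \<Otimes>\<^sub>M borel)"
    and "\<And>E. E \<in> sets (count_space (UNIV::bool set) \<Otimes>\<^sub>M borel) \<Longrightarrow>
           measure (unit_law p Q0 Q1) E = p * measure Q1 (Pair True -` E) + (1 - p) * measure Q0 (Pair False -` E)"
proof -
  let ?K = "count_space (UNIV::bool set) \<Otimes>\<^sub>M (borel :: ('a \<times> real \<times> real) measure)"
  let ?N = "\<lambda>z. distr (if z then Q1 else Q0) ?K (Pair z)"
  have Nm: "\<And>z. (Pair z) \<in> measurable (if z then Q1 else Q0) ?K"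
  proof -
    fix z
    have "sets (if z then Q1 else Q0) = sets borel" using Q0 Q1 by simp
    then have "(\<lambda>x. (z, x)) \<in> measurable (if z then Q1 else Q0) ?K"
      by (intro measurable_Pair measurable_const measurable_ident_sets) auto
    then show "(Pair z) \<in> measurable (if z then Q1 else Q0) ?K" by simp
  qed
  have Nprob: "prob_space (?N z)" for z
  proof -
    have "prob_space (if z then Q1 else Q0)" using Q0 Q1 by simp
    from prob_space.prob_space_distr[OF this Nm] show ?thesis .
  qed
  have Nsets: "sets (?N z) = sets ?K" for z by simp
  have Nsub: "?N \<in> measurable (measure_pmf (bernoulli_pmf p)) (subprob_algebra ?K)"
    unfolding measurable_pmf_measure1
  proof (intro Pi_I)
    fix z :: bool
    show "?N z \<in> space (subprob_algebra ?K)"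
      unfolding space_subprob_algebra using prob_space_imp_subprob_space[OF Nprob[of z]] Nsets[of z] by blast
  qed
  show S: "sets (unit_law p Q0 Q1) = sets ?K"
    unfolding unit_law_def by (rule sets_bind[OF Nsets]) simp
  show "prob_space (unit_law p Q0 Q1)"
    unfolding unit_law_def
    by (rule measure_pmf.prob_space_bind[OF AE_I2 Nsub]) (rule Nprob)
  fix E assume E: "E \<in> sets ?K"
  have "emeasure (unit_law p Q0 Q1) E = (\<integral>\<^sup>+z. emeasure (?N z) E \<partial>measure_pmf (bernoulli_pmf p))"
    unfolding unit_law_def by (rule emeasure_bind[OF _ Nsub E]) simp
  also have "\<dots> = (\<Sum>z\<in>UNIV. emeasure (?N z) E * pmf (bernoulli_pmf p) z)"
    by (rule nn_integral_measure_pmf_support) auto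
  also have "\<dots> = emeasure Q1 (Pair True -` E) * p + emeasure Q0 (Pair False -` E) * (1 - p)"
  proof -
    have sp: "space Q1 = UNIV" "space Q0 = UNIV"
      using sets_eq_imp_space_eq[OF Q1(2)] sets_eq_imp_space_eq[OF Q0(2)] by auto
    have a: "emeasure (?N True) E = emeasure Q1 (Pair True -` E)"
      using emeasure_distr[OF Nm[of True] E] sp by simp
    have b: "emeasure (?N False) E = emeasure Q0 (Pair False -` E)"
      using emeasure_distr[OF Nm[of False] E] sp by simp
    have sb: "(\<Sum>z\<in>UNIV. F z) = F True + F False" for F :: "bool \<Rightarrow> ennreal"
      by (simp add: UNIV_bool add.commute)
    show ?thesis unfolding sb a b using p by simp
  qed
  finally have em: "emeasure (unit_law p Q0 Q1) E = \<dots>" .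
  show "measure (unit_law p Q0 Q1) E = p * measure Q1 (Pair True -` E) + (1 - p) * measure Q0 (Pair False -` E)"
  proof -
    interpret Q0: prob_space Q0 by (rule Q0(1))
    interpret Q1: prob_space Q1 by (rule Q1(1))
    have "emeasure (unit_law p Q0 Q1) E = ennreal (p * measure Q1 (Pair True -` E) + (1 - p) * measure Q0 (Pair False -` E))"
    proof -
      have g: "ennreal a * ennreal p + ennreal b * ennreal (1 - p) = ennreal (p * a + (1 - p) * b)"
        if "0 \<le> a" "0 \<le> b" for a b
      proof -
        have "ennreal a * ennreal p + ennreal b * ennreal (1 - p) = ennreal (a * p) + ennreal (b * (1 - p))"
          using that p by (simp add: ennreal_mult'')
        also have "\<dots> = ennreal (a * p + b * (1 - p))"
          using that p by (intro ennreal_plus[symmetric]) auto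
        finally show ?thesis by (simp add: algebra_simps)
      qed
      show ?thesis unfolding em Q0.emeasure_eq_measure Q1.emeasure_eq_measure by (rule g) auto
    qed
    then have "enn2real (emeasure (unit_law p Q0 Q1) E) = p * measure Q1 (Pair True -` E) + (1 - p) * measure Q0 (Pair False -` E)"
      using p by (simp only: enn2real_ennreal) (intro enn2real_ennreal add_nonneg_nonneg mult_nonneg_nonneg; simp)
    then show ?thesis by (simp add: measure_def)
  qed
qed




lemma q0_lower:
  fixes Q0 :: "('a::euclidean_space \<times> real \<times> real) measure" and \<nu> :: "'a measure"
  assumes Q0: "prob_space Q0" "sets Q0 = sets borel"
    and nu_sets: "sets \<nu> = sets borel"
    and f0_meas: "f0 \<in> borel_measurable borel"
    and dens0: "distr Q0 borel fst = density \<nu> (\<lambda>x. ennreal (f0 x))"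
    and hv: "cond_surv_version Q0 \<tau> h" and c: "0 < c"
    and AEc: "AE x in \<nu>. x \<in> Xc \<longrightarrow> c \<le> f0 x * h x"
    and a: "a \<in> sets borel" "a \<subseteq> Xc"
  shows "c * measure \<nu> a \<le> measure Q0 {v \<in> space Q0. fst v \<in> a \<and> \<tau> \<le> min (fst (snd v)) (snd (snd v))}"
proof (cases "emeasure \<nu> a = \<infinity>")
  case True
  then have "measure \<nu> a = 0" by (simp add: measure_def)
  then show ?thesis by simp
next
  case False
  interpret Q0: prob_space Q0 by (rule Q0(1))
  let ?D = "distr Q0 borel fst"
  have fstm: "fst \<in> measurable Q0 borel"
    using Q0(2) by (simp add: measurable_cong_sets[OF Q0(2) refl] borel_measurable_continuous_onI continuous_on_fst continuous_on_id)
  interpret D: prob_space ?D by (rule Q0.prob_space_distr[OF fstm])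
  have hm: "h \<in> borel_measurable borel" and hb: "\<And>x. 0 \<le> h x \<and> h x \<le> 1"
    and heq: "measure Q0 {v \<in> space Q0. fst v \<in> a \<and> \<tau> \<le> min (fst (snd v)) (snd (snd v))}
        = (\<integral>x. indicator a x * h x \<partial>?D)"
    using hv a unfolding cond_surv_version_def by auto
  have im: "(\<lambda>x. indicator a x * h x) \<in> borel_measurable ?D"
    using hm a by simp
  have iint: "integrable ?D (\<lambda>x. indicator a x * h x)"
    by (rule D.integrable_const_bound[where B=1]) (use hb im in \<open>auto intro!: AE_I2 simp: indicator_def\<close>)
  have "ennreal (measure Q0 {v \<in> space Q0. fst v \<in> a \<and> \<tau> \<le> min (fst (snd v)) (snd (snd v))})
      = (\<integral>\<^sup>+x. ennreal (indicator a x * h x) \<partial>?D)"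
    unfolding heq by (rule nn_integral_eq_integral[symmetric, OF iint]) (use hb in \<open>auto intro!: AE_I2\<close>)
  also have "\<dots> = (\<integral>\<^sup>+x. ennreal (f0 x) * ennreal (indicator a x * h x) \<partial>\<nu>)"
    unfolding dens0 by (rule nn_integral_density) (use f0_meas hm a nu_sets in \<open>auto simp: measurable_cong_sets[OF nu_sets refl]\<close>)
  also have "\<dots> \<ge> (\<integral>\<^sup>+x. ennreal c * indicator a x \<partial>\<nu>)"
  proof (rule nn_integral_mono_AE)
    show "AE x in \<nu>. ennreal c * indicator a x \<le> ennreal (f0 x) * ennreal (indicator a x * h x)"
      using AEc
    proof eventually_elim
      case (elim x)
      show ?case
      proof (cases "x \<in> a")
        case True
        then have "c \<le> f0 x * h x" using elim a by auto
        moreover have "0 \<le> f0 x * h x" using c calculation by linarith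
        ultimately show ?thesis using True c hb[of x] by (simp add: ennreal_mult''[symmetric] ennreal_leI)
      qed simp
    qed
  qed
  also have "(\<integral>\<^sup>+x. ennreal c * indicator a x \<partial>\<nu>) = ennreal c * emeasure \<nu> a"
    using a nu_sets by (simp add: nn_integral_cmult_indicator)
  also have "\<dots> = ennreal (c * measure \<nu> a)"
    using False c by (simp add: emeasure_eq_ennreal_measure ennreal_mult'' top.not_eq_extremum)
  finally have X: "ennreal (c * measure \<nu> a) \<le> ennreal (measure Q0 {v \<in> space Q0. fst v \<in> a \<and> \<tau> \<le> min (fst (snd v)) (snd (snd v))})" .
  show ?thesis using X by (subst (asm) ennreal_le_iff) auto
qed


lemma q1_upper:
  fixes Q1 :: "('a::euclidean_space \<times> real \<times> real) measure" and \<nu> :: "'a measure"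
  assumes Q1: "prob_space Q1" "sets Q1 = sets borel"
    and nu_sets: "sets \<nu> = sets borel"
    and f1_meas: "f1 \<in> borel_measurable borel"
    and dens1: "distr Q1 borel fst = density \<nu> (\<lambda>x. ennreal (f1 x))"
    and C: "0 \<le> C" and AEC: "AE x in \<nu>. x \<in> Xc \<longrightarrow> f1 x \<le> C"
    and a: "a \<in> sets borel" "a \<subseteq> Xc" "emeasure \<nu> a < \<infinity>"
  shows "measure Q1 {v \<in> space Q1. fst v \<in> a} \<le> C * measure \<nu> a"
proof -
  interpret Q1: prob_space Q1 by (rule Q1(1))
  let ?D = "distr Q1 borel fst"
  have fstm: "fst \<in> measurable Q1 borel"
    using Q1(2) by (simp add: measurable_cong_sets[OF Q1(2) refl] borel_measurable_continuous_onI continuous_on_fst continuous_on_id)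
  interpret D: prob_space ?D by (rule Q1.prob_space_distr[OF fstm])
  have "measure Q1 {v \<in> space Q1. fst v \<in> a} = measure ?D a"
  proof -
    have "fst -` a \<inter> space Q1 = {v \<in> space Q1. fst v \<in> a}" by auto
    then show ?thesis using measure_distr[OF fstm a(1)] by simp
  qed
  then have "ennreal (measure Q1 {v \<in> space Q1. fst v \<in> a}) = emeasure ?D a"
    by (simp add: D.emeasure_eq_measure)
  also have "\<dots> = (\<integral>\<^sup>+x. ennreal (f1 x) * indicator a x \<partial>\<nu>)"
    unfolding dens1 by (rule emeasure_density) (use f1_meas a nu_sets in \<open>auto simp: measurable_cong_sets[OF nu_sets refl]\<close>)
  also have "\<dots> \<le> (\<integral>\<^sup>+x. ennreal C * indicator a x \<partial>\<nu>)"
  proof (rule nn_integral_mono_AE)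
    show "AE x in \<nu>. ennreal (f1 x) * indicator a x \<le> ennreal C * indicator a x"
      using AEC
    proof eventually_elim
      case (elim x)
      show ?case
      proof (cases "x \<in> a")
        case True
        then have "f1 x \<le> C" using elim a by auto
        then show ?thesis using True by (simp add: ennreal_leI)
      qed simp
    qed
  qed
  also have "(\<integral>\<^sup>+x. ennreal C * indicator a x \<partial>\<nu>) = ennreal C * emeasure \<nu> a"
    using a nu_sets by (simp add: nn_integral_cmult_indicator)
  also have "\<dots> = ennreal (C * measure \<nu> a)"
    using a C by (simp add: emeasure_eq_ennreal_measure ennreal_mult'' top.not_eq_extremum)
  finally have X: "ennreal (measure Q1 {v \<in> space Q1. fst v \<in> a}) \<le> ennreal (C * measure \<nu> a)" .
  show ?thesis using X C by (subst (asm) ennreal_le_iff) auto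
qed




lemma E_sets:
  fixes a :: "'a::euclidean_space set"
  assumes a: "a \<in> sets borel"
  shows "{v::bool\<times>'a\<times>real\<times>real. \<not> fst v \<and> fst (snd v) \<in> a \<and> \<tau> \<le> min (fst (snd (snd v))) (snd (snd (snd v)))}
           \<in> sets (count_space UNIV \<Otimes>\<^sub>M borel)"
    and "{v::bool\<times>'a\<times>real\<times>real. fst v \<and> fst (snd v) \<in> a} \<in> sets (count_space UNIV \<Otimes>\<^sub>M borel)"
proof -
  have cl: "closed {w::real\<times>real. \<tau> \<le> min (fst w) (snd w)}"
    by (intro closed_Collect_le continuous_intros)
  have C: "{w::real\<times>real. \<tau> \<le> min (fst w) (snd w)} \<in> sets borel"
    using cl by (rule borel_closed)
  have "a \<times> {w::real\<times>real. \<tau> \<le> min (fst w) (snd w)} \<in> sets (borel \<Otimes>\<^sub>M borel)"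
    using a C by (rule pair_measureI)
  then have B: "a \<times> {w::real\<times>real. \<tau> \<le> min (fst w) (snd w)} \<in> sets (borel :: ('a \<times> real \<times> real) measure)"
    by (simp only: borel_prod)
  have "{False} \<times> (a \<times> {w::real\<times>real. \<tau> \<le> min (fst w) (snd w)}) \<in> sets (count_space UNIV \<Otimes>\<^sub>M borel)"
    using B by (intro pair_measureI) auto
  moreover have "{False} \<times> (a \<times> {w::real\<times>real. \<tau> \<le> min (fst w) (snd w)}) =
     {v::bool\<times>'a\<times>real\<times>real. \<not> fst v \<and> fst (snd v) \<in> a \<and> \<tau> \<le> min (fst (snd (snd v))) (snd (snd (snd v)))}"
    by auto
  ultimately show "{v::bool\<times>'a\<times>real\<times>real. \<not> fst v \<and> fst (snd v) \<in> a \<and> \<tau> \<le> min (fst (snd (snd v))) (snd (snd (snd v)))}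
           \<in> sets (count_space UNIV \<Otimes>\<^sub>M borel)" by simp
  have "a \<times> (UNIV::(real\<times>real) set) \<in> sets (borel \<Otimes>\<^sub>M borel)"
    using a by (intro pair_measureI) auto
  then have B: "a \<times> (UNIV::(real\<times>real) set) \<in> sets (borel :: ('a \<times> real \<times> real) measure)"
    by (simp only: borel_prod)
  have "{True} \<times> (a \<times> (UNIV::(real\<times>real) set)) \<in> sets (count_space UNIV \<Otimes>\<^sub>M borel)"
    using B by (intro pair_measureI) auto
  moreover have "{True} \<times> (a \<times> (UNIV::(real\<times>real) set)) = {v::bool\<times>'a\<times>real\<times>real. fst v \<and> fst (snd v) \<in> a}"
    by auto
  ultimately show "{v::bool\<times>'a\<times>real\<times>real. fst v \<and> fst (snd v) \<in> a} \<in> sets (count_space UNIV \<Otimes>\<^sub>M borel)" by simp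
qed

lemma prob_all_ge:
  assumes M: "prob_space M" and A: "finite A"
    and ms: "\<And>a. a \<in> A \<Longrightarrow> {\<omega> \<in> space M. \<not> P a \<omega>} \<in> sets M"
    and r: "\<And>a. a \<in> A \<Longrightarrow> measure M {\<omega> \<in> space M. \<not> P a \<omega>} \<le> r"
  shows "{\<omega> \<in> space M. \<forall>a\<in>A. P a \<omega>} \<in> sets M"
    and "1 - real (card A) * r \<le> measure M {\<omega> \<in> space M. \<forall>a\<in>A. P a \<omega>}"
proof -
  interpret M: prob_space M by (rule M)
  let ?U = "\<Union>a\<in>A. {\<omega> \<in> space M. \<not> P a \<omega>}"
  have U: "?U \<in> sets M" using A ms by auto
  have eq: "{\<omega> \<in> space M. \<forall>a\<in>A. P a \<omega>} = space M - ?U" by auto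
  show "{\<omega> \<in> space M. \<forall>a\<in>A. P a \<omega>} \<in> sets M" unfolding eq using U by auto
  have "measure M ?U \<le> (\<Sum>a\<in>A. measure M {\<omega> \<in> space M. \<not> P a \<omega>})"
    by (rule M.finite_measure_subadditive_finite) (use A ms in auto)
  also have "\<dots> \<le> (\<Sum>a\<in>A. r)" by (rule sum_mono) (rule r)
  also have "\<dots> = real (card A) * r" by simp
  finally show "1 - real (card A) * r \<le> measure M {\<omega> \<in> space M. \<forall>a\<in>A. P a \<omega>}"
    unfolding eq using M.prob_compl[OF U] by simp
qed

lemma card_bound:
  fixes \<nu> :: "'a measure"
  assumes A: "finite A" and Am: "\<And>a. a \<in> A \<Longrightarrow> a \<in> sets \<nu>" and disj: "disjoint A"
    and cov: "\<Union>A = Xc" and fin: "emeasure \<nu> Xc < \<infinity>"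
    and c: "\<And>a. a \<in> A \<Longrightarrow> c \<le> measure \<nu> a"
  shows "real (card A) * c \<le> measure \<nu> Xc"
proof -
  have fa: "emeasure \<nu> a < \<infinity>" if "a \<in> A" for a
  proof -
    have Xs: "Xc \<in> sets \<nu>" unfolding cov[symmetric] using A Am by (intro sets.finite_Union) auto
    have "a \<subseteq> Xc" using that cov by auto
    then have "emeasure \<nu> a \<le> emeasure \<nu> Xc" using Xs by (rule emeasure_mono)
    then show ?thesis using fin by simp
  qed
  have "(\<Sum>a\<in>A. emeasure \<nu> a) = emeasure \<nu> (\<Union>a\<in>A. a)"
    by (rule sum_emeasure) (use Am A disj in \<open>auto simp: disjoint_family_on_def disjoint_def\<close>)
  then have "(\<Sum>a\<in>A. ennreal (measure \<nu> a)) = ennreal (measure \<nu> Xc)"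
    using cov fin fa by (simp add: emeasure_eq_ennreal_measure top.not_eq_extremum)
  then have "(\<Sum>a\<in>A. measure \<nu> a) = measure \<nu> Xc"
    by (simp add: sum_ennreal sum_nonneg)
  moreover have "real (card A) * c \<le> (\<Sum>a\<in>A. measure \<nu> a)"
    using sum_mono[of A "\<lambda>_. c" "\<lambda>a. measure \<nu> a"] c by simp
  ultimately show ?thesis by simp
qed




lemma ev_pow_le:
  assumes "a > 0" "e > 0" "C > 0"
  shows "eventually (\<lambda>x::real. x powr (a - e) \<le> C * x powr a) at_top"
  using assms by real_asymp

lemma lim_pow_exp:
  assumes "a > 0" "c > 0"
  shows "((\<lambda>x::real. x powr k * exp (- c * x powr a)) \<longlongrightarrow> 0) at_top"
  using assms by real_asymp

lemma lim_gen:
  assumes a: "a > 0" and c: "c > 0" and e: "e > 0" and d: "d \<ge> 0"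
  shows "(\<lambda>n. real n powr k * exp (d * real n powr (a - e) - c * real n powr a)) \<longlonglongrightarrow> 0"
proof -
  have ev: "eventually (\<lambda>x::real. x powr (a - e) \<le> (c / (2 * (d + 1))) * x powr a) at_top"
    by (rule ev_pow_le) (use a e c d in auto)
  have "((\<lambda>x::real. x powr k * exp (d * x powr (a - e) - c * x powr a)) \<longlongrightarrow> 0) at_top"
  proof (rule tendsto_sandwich[OF _ _ tendsto_const lim_pow_exp[of a "c/2" k]])
    show "eventually (\<lambda>x. 0 \<le> x powr k * exp (d * x powr (a - e) - c * x powr a)) at_top" by simp
    show "eventually (\<lambda>x. x powr k * exp (d * x powr (a - e) - c * x powr a) \<le> x powr k * exp (- (c / 2) * x powr a)) at_top"
      using ev eventually_ge_at_top[of 1]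
    proof eventually_elim
      case (elim x)
      have "d * x powr (a - e) \<le> d * ((c / (2 * (d + 1))) * x powr a)"
        using elim d by (intro mult_left_mono) auto
      also have "\<dots> \<le> (c/2) * x powr a"
      proof -
        have "d / (d + 1) \<le> 1" using d by simp
        then have "d * (c / (2 * (d + 1))) \<le> c / 2" using c d by (simp add: field_simps)
        then show ?thesis using mult_right_mono[of "d * (c / (2 * (d + 1)))" "c/2" "x powr a"] by (simp add: mult.assoc)
      qed
      finally have "d * x powr (a - e) - c * x powr a \<le> - (c / 2) * x powr a" by simp
      then show ?case by (intro mult_left_mono) auto
    qed
  qed (use a c in auto)
  from filterlim_compose[OF this filterlim_real_sequentially] show ?thesis by (simp add: o_def)
qed




lemma cell_event0:
  fixes Q0 Q1 :: "('a::euclidean_space \<times> real \<times> real) measure" and a :: "'a set"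
  assumes Q0: "prob_space Q0" "sets Q0 = sets borel" and Q1: "prob_space Q1" "sets Q1 = sets borel"
    and p: "0 \<le> p" "p \<le> 1" and a: "a \<in> sets borel"
  shows "{\<omega> \<in> space (sample_space n p Q0 Q1). \<not> (k < (\<Sum>i\<in>grp \<omega> n False. of_bool (Xv \<omega> i \<in> a) * Yv \<omega> i \<tau>))}
           \<in> sets (sample_space n p Q0 Q1)"
    and "measure (sample_space n p Q0 Q1) {\<omega> \<in> space (sample_space n p Q0 Q1). \<not> (k < (\<Sum>i\<in>grp \<omega> n False. of_bool (Xv \<omega> i \<in> a) * Yv \<omega> i \<tau>))} \<le> exp (k - (1 - exp (-1)) * real n *
           ((1 - p) * measure Q0 {v \<in> space Q0. fst v \<in> a \<and> \<tau> \<le> min (fst (snd v)) (snd (snd v))}))"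
proof -
  let ?S = "{\<omega> \<in> space (sample_space n p Q0 Q1). \<not> (k < (\<Sum>i\<in>grp \<omega> n False. of_bool (Xv \<omega> i \<in> a) * Yv \<omega> i \<tau>))}"
  let ?U = "unit_law p Q0 Q1"
  let ?E = "{v::bool\<times>'a\<times>real\<times>real. \<not> fst v \<and> fst (snd v) \<in> a \<and> \<tau> \<le> min (fst (snd (snd v))) (snd (snd (snd v)))}"
  let ?g = "indicator ?E :: bool\<times>'a\<times>real\<times>real \<Rightarrow> real"
  note UF = unit_law_facts[OF Q0 Q1 p]
  have Es: "?E \<in> sets ?U" using UF(2) E_sets(1)[OF a] by simp
  have gm: "?g \<in> borel_measurable ?U" using Es by simp
  have g01: "?g x = 0 \<or> ?g x = 1" for x by (simp add: indicator_def)
  have sum_eq: "(\<Sum>i\<in>grp \<omega> n False. of_bool (Xv \<omega> i \<in> a) * Yv \<omega> i \<tau>) = (\<Sum>i\<in>{1..n}. ?g (\<omega> i))" for \<omega>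
    unfolding grp_def Zv_def
    by (subst sum.inter_filter, simp, rule sum.cong) (auto simp: indicator_def Xv_def Yv_def Tv_def Uv_def)
  have S: "?S = {\<omega> \<in> space (PiM {1..n} (\<lambda>_. ?U)). (\<Sum>i\<in>{1..n}. ?g (\<omega> i)) \<le> k}"
    unfolding sum_eq sample_space_def by (simp add: not_less)
  show "?S \<in> sets (sample_space n p Q0 Q1)"
    unfolding S unfolding sample_space_def using gm by measurable
  have "measure (sample_space n p Q0 Q1) ?S \<le> exp (k - (1 - exp (-1)) * real (card {1..n}) * (\<integral>x. ?g x \<partial>?U))"
    unfolding S unfolding sample_space_def by (rule chernoff_lower[OF UF(1) gm g01]) simp
  also have "(\<integral>x. ?g x \<partial>?U) = measure ?U ?E"
  proof -
    have "space ?U = UNIV" using sets_eq_imp_space_eq[OF UF(2)] by (simp add: space_pair_measure)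
    then show ?thesis by simp
  qed
  also have "\<dots> = (1 - p) * measure Q0 {v \<in> space Q0. fst v \<in> a \<and> \<tau> \<le> min (fst (snd v)) (snd (snd v))}"
  proof -
    have sp: "space Q0 = UNIV" using sets_eq_imp_space_eq[OF Q0(2)] by simp
    have "Pair True -` ?E = {}" by auto
    moreover have "Pair False -` ?E = {v \<in> space Q0. fst v \<in> a \<and> \<tau> \<le> min (fst (snd v)) (snd (snd v))}"
      using sp by auto
    ultimately show ?thesis using UF(3)[OF E_sets(1)[OF a]] by simp
  qed
  finally show "measure (sample_space n p Q0 Q1) ?S \<le> exp (k - (1 - exp (-1)) * real n *
           ((1 - p) * measure Q0 {v \<in> space Q0. fst v \<in> a \<and> \<tau> \<le> min (fst (snd v)) (snd (snd v))}))"
    by simp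
qed

lemma cell_event1:
  fixes Q0 Q1 :: "('a::euclidean_space \<times> real \<times> real) measure" and a :: "'a set"
  assumes Q0: "prob_space Q0" "sets Q0 = sets borel" and Q1: "prob_space Q1" "sets Q1 = sets borel"
    and p: "0 \<le> p" "p \<le> 1" and a: "a \<in> sets borel"
  shows "{\<omega> \<in> space (sample_space n p Q0 Q1). \<not> ((\<Sum>i\<in>grp \<omega> n True. of_bool (Xv \<omega> i \<in> a) :: real) < k)}
           \<in> sets (sample_space n p Q0 Q1)"
    and "measure (sample_space n p Q0 Q1) {\<omega> \<in> space (sample_space n p Q0 Q1). \<not> ((\<Sum>i\<in>grp \<omega> n True. of_bool (Xv \<omega> i \<in> a) :: real) < k)} \<le> exp (- k + (exp 1 - 1) * real n *
           (p * measure Q1 {v \<in> space Q1. fst v \<in> a}))"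
proof -
  let ?S = "{\<omega> \<in> space (sample_space n p Q0 Q1). \<not> ((\<Sum>i\<in>grp \<omega> n True. of_bool (Xv \<omega> i \<in> a) :: real) < k)}"
  let ?U = "unit_law p Q0 Q1"
  let ?E = "{v::bool\<times>'a\<times>real\<times>real. fst v \<and> fst (snd v) \<in> a}"
  let ?g = "indicator ?E :: bool\<times>'a\<times>real\<times>real \<Rightarrow> real"
  note UF = unit_law_facts[OF Q0 Q1 p]
  have Es: "?E \<in> sets ?U" using UF(2) E_sets(2)[OF a] by simp
  have gm: "?g \<in> borel_measurable ?U" using Es by simp
  have g01: "?g x = 0 \<or> ?g x = 1" for x by (simp add: indicator_def)
  have sum_eq: "(\<Sum>i\<in>grp \<omega> n True. of_bool (Xv \<omega> i \<in> a) :: real) = (\<Sum>i\<in>{1..n}. ?g (\<omega> i))" for \<omega>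
    unfolding grp_def Zv_def
    by (subst sum.inter_filter, simp, rule sum.cong) (auto simp: indicator_def Xv_def Yv_def Tv_def Uv_def)
  have S: "?S = {\<omega> \<in> space (PiM {1..n} (\<lambda>_. ?U)). k \<le> (\<Sum>i\<in>{1..n}. ?g (\<omega> i))}"
    unfolding sum_eq sample_space_def by (simp add: not_less)
  show "?S \<in> sets (sample_space n p Q0 Q1)"
    unfolding S unfolding sample_space_def using gm by measurable
  have "measure (sample_space n p Q0 Q1) ?S \<le> exp (- k + (exp 1 - 1) * real (card {1..n}) * (\<integral>x. ?g x \<partial>?U))"
    unfolding S unfolding sample_space_def by (rule chernoff_upper[OF UF(1) gm g01]) simp
  also have "(\<integral>x. ?g x \<partial>?U) = measure ?U ?E"
  proof -
    have "space ?U = UNIV" using sets_eq_imp_space_eq[OF UF(2)] by (simp add: space_pair_measure)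
    then show ?thesis by simp
  qed
  also have "\<dots> = p * measure Q1 {v \<in> space Q1. fst v \<in> a}"
  proof -
    have sp: "space Q1 = UNIV" using sets_eq_imp_space_eq[OF Q1(2)] by simp
    have "Pair False -` ?E = {}" by auto
    moreover have "Pair True -` ?E = {v \<in> space Q1. fst v \<in> a}"
      using sp by auto
    ultimately show ?thesis using UF(3)[OF E_sets(2)[OF a]] by simp
  qed
  finally show "measure (sample_space n p Q0 Q1) ?S \<le> exp (- k + (exp 1 - 1) * real n *
           (p * measure Q1 {v \<in> space Q1. fst v \<in> a}))"
    by simp
qed





lemma cell_eq:
  assumes "disjoint A" "a \<in> A" "x \<in> a"
  shows "cell A x = a"
  unfolding cell_def
proof (rule the_equality)
  show "a \<in> A \<and> x \<in> a" using assms by auto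
  fix b assume "b \<in> A \<and> x \<in> b"
  then show "b = a" using assms unfolding disjoint_def by blast
qed

lemma measure_le_two_compl:
  assumes M: "prob_space M" and E1: "E1 \<in> sets M" and E2: "E2 \<in> sets M"
    and B: "B \<subseteq> (space M - E1) \<union> (space M - E2)"
  shows "measure M B \<le> (1 - measure M E1) + (1 - measure M E2)"
proof (cases "B \<in> sets M")
  case True
  interpret M: prob_space M by (rule M)
  have "measure M B \<le> measure M ((space M - E1) \<union> (space M - E2))"
    using B E1 E2 by (intro M.finite_measure_mono) auto
  also have "\<dots> \<le> measure M (space M - E1) + measure M (space M - E2)"
    using E1 E2 by (intro measure_subadditive) (auto simp: M.emeasure_eq_measure)
  finally show ?thesis using M.prob_compl[OF E1] M.prob_compl[OF E2] by simp
next
  case False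
  interpret M: prob_space M by (rule M)
  have "measure M E1 \<le> 1" "measure M E2 \<le> 1" by auto
  moreover have "measure M B = 0" using False by (simp add: measure_notin_sets)
  ultimately show ?thesis by linarith
qed






lemma grp_finite: "finite (grp \<omega> n z)"
  unfolding grp_def by simp

lemma pw3:
  assumes disj: "disjoint A" and i: "i \<in> G1 A \<omega> n"
    and ev: "\<forall>a\<in>A. k < (\<Sum>j\<in>grp \<omega> n False. of_bool (Xv \<omega> j \<in> a) * Yv \<omega> j \<tau>)" and k: "0 \<le> k"
  shows "(\<Sum>j\<in>G0 A \<omega> n. of_bool (Xv \<omega> j \<in> cell A (Xv \<omega> i)) * Yv \<omega> j \<tau>) \<noteq> 0"
proof -
  obtain j a where ig: "i \<in> grp \<omega> n True" and jg: "j \<in> grp \<omega> n False" and a: "a \<in> A"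
    and xi: "Xv \<omega> i \<in> a" and xj: "Xv \<omega> j \<in> a"
    using i unfolding G1_def matched_pairs_def by auto
  have c: "cell A (Xv \<omega> i) = a" by (rule cell_eq[OF disj a xi])
  have sub: "G0 A \<omega> n \<subseteq> grp \<omega> n False" unfolding G0_def matched_pairs_def by auto
  have "(\<Sum>j\<in>G0 A \<omega> n. of_bool (Xv \<omega> j \<in> a) * Yv \<omega> j \<tau>) = (\<Sum>j\<in>grp \<omega> n False. of_bool (Xv \<omega> j \<in> a) * Yv \<omega> j \<tau>)"
  proof (rule sum.mono_neutral_left[OF grp_finite sub], rule ballI)
    fix j' assume j': "j' \<in> grp \<omega> n False - G0 A \<omega> n"
    show "of_bool (Xv \<omega> j' \<in> a) * Yv \<omega> j' \<tau> = 0"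
    proof (cases "Xv \<omega> j' \<in> a")
      case True
      then have "(i, j') \<in> matched_pairs A \<omega> n" unfolding matched_pairs_def using ig j' a xi by auto
      then have "j' \<in> G0 A \<omega> n" unfolding G0_def by force
      then show ?thesis using j' by simp
    qed simp
  qed
  moreover have "k < (\<Sum>j\<in>grp \<omega> n False. of_bool (Xv \<omega> j \<in> a) * Yv \<omega> j \<tau>)" using ev a by auto
  ultimately show ?thesis unfolding c using k by simp
qed

lemma pw4:
  assumes disj: "disjoint A" and i: "i \<in> G0 A \<omega> n" and t: "t \<le> \<tau>"
    and ev1: "\<forall>a\<in>A. k1 < (\<Sum>j\<in>grp \<omega> n False. of_bool (Xv \<omega> j \<in> a) * Yv \<omega> j \<tau>)"
    and ev2: "\<forall>a\<in>A. (\<Sum>j\<in>grp \<omega> n True. of_bool (Xv \<omega> j \<in> a) :: real) < k2"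
    and k1: "0 < k1"
  shows "\<bar>weight A \<omega> n i t\<bar> \<le> k2 / k1"
proof -
  obtain i' a where ig: "i' \<in> grp \<omega> n True" and jg: "i \<in> grp \<omega> n False" and a: "a \<in> A"
    and xi: "Xv \<omega> i' \<in> a" and xj: "Xv \<omega> i \<in> a"
    using i unfolding G0_def matched_pairs_def by auto
  have nG1: "i \<notin> G1 A \<omega> n"
  proof
    assume "i \<in> G1 A \<omega> n"
    then have "i \<in> grp \<omega> n True" unfolding G1_def matched_pairs_def by auto
    then show False using jg unfolding grp_def by auto
  qed
  have c: "cell A (Xv \<omega> i) = a" by (rule cell_eq[OF disj a xj])
  define Ct where "Ct = (\<Sum>j\<in>grp \<omega> n False. of_bool (Xv \<omega> j \<in> a) * Yv \<omega> j t)"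
  define Tt where "Tt = (\<Sum>j\<in>grp \<omega> n True. of_bool (Xv \<omega> j \<in> a) * Yv \<omega> j t)"
  have w: "weight A \<omega> n i t = ginv Ct * Tt"
    unfolding weight_def Ct_def Tt_def c using nG1 i by simp
  have "(\<Sum>j\<in>grp \<omega> n False. of_bool (Xv \<omega> j \<in> a) * Yv \<omega> j \<tau>) \<le> Ct"
    unfolding Ct_def by (rule sum_mono) (use t in \<open>auto simp: Yv_def\<close>)
  then have Ct: "k1 < Ct" using ev1 a by force
  have "Tt \<le> (\<Sum>j\<in>grp \<omega> n True. of_bool (Xv \<omega> j \<in> a))"
    unfolding Tt_def by (rule sum_mono) (auto simp: Yv_def)
  then have Tt: "Tt < k2" using ev2 a by force
  have Tt0: "0 \<le> Tt" unfolding Tt_def by (rule sum_nonneg) (auto simp: Yv_def)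
  have "weight A \<omega> n i t = Tt / Ct" unfolding w ginv_def using Ct k1 by simp
  moreover have "Tt / Ct \<le> k2 / k1"
    using Tt Tt0 Ct k1 by (intro frac_le) auto
  moreover have "0 \<le> Tt / Ct" using Tt0 Ct k1 by simp
  ultimately show ?thesis by simp
qed

theorem mainTheorem13:
  fixes Q0 Q1 :: "('a::euclidean_space \<times> real \<times> real) measure"
    and p :: "nat \<Rightarrow> real"
    and \<nu> :: "'a measure"
    and f0 f1 :: "'a \<Rightarrow> real"
    and Xc :: "'a set"
    and A :: "nat \<Rightarrow> 'a set set"
    and \<tau> \<beta> \<theta> :: real
    and dbar :: nat
  assumes Q0_prob: "prob_space Q0" and Q0_sets: "sets Q0 = sets borel"
    and Q1_prob: "prob_space Q1" and Q1_sets: "sets Q1 = sets borel"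
    and TU_pos0: "AE v in Q0. 0 < fst (snd v) \<and> 0 < snd (snd v)"
    and TU_pos1: "AE v in Q1. 0 < fst (snd v) \<and> 0 < snd (snd v)"
    and p_range: "\<And>n. 0 \<le> p n \<and> p n \<le> 1"
    and tau_pos: "0 < \<tau>"
    and Xc_compact: "compact Xc"
    \<comment> \<open>the partitions\<close>
    and A_finite: "\<And>n. finite (A n)"
    and A_meas: "\<And>n a. a \<in> A n \<Longrightarrow> a \<in> sets borel"
    and A_disj: "\<And>n. disjoint (A n)"
    and A_cover: "\<And>n. \<Union> (A n) = Xc"
    \<comment> \<open>[B1]\<close>
    and B1: "0 < \<beta>" "\<beta> < 1" "0 < \<theta>" "\<theta> < 1" "1 \<le> dbar" "dbar \<le> DIM('a)"
            "\<beta> < 2 * \<theta>" "real dbar * \<theta> < 1"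
    \<comment> \<open>[B2]\<close>
    and B2: "\<exists>c C. 0 < c \<and> 0 < C \<and>
               (\<forall>n\<ge>1. c * real n powr (\<beta> - 1) \<le> p n \<and> p n \<le> C * real n powr (\<beta> - 1))"
    \<comment> \<open>[B3]\<close>
    and nu_sets: "sets \<nu> = sets borel" and nu_sigma: "sigma_finite_measure \<nu>"
    and nu_Xc: "emeasure \<nu> Xc < \<infinity>"
    and f0_meas: "f0 \<in> borel_measurable borel" and f0_nonneg: "\<And>x. 0 \<le> f0 x"
    and f1_meas: "f1 \<in> borel_measurable borel" and f1_nonneg: "\<And>x. 0 \<le> f1 x"
    and dens0: "distr Q0 borel fst = density \<nu> (\<lambda>x. ennreal (f0 x))"
    and dens1: "distr Q1 borel fst = density \<nu> (\<lambda>x. ennreal (f1 x))"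
    and B3_sup: "\<exists>C. AE x in \<nu>. x \<in> Xc \<longrightarrow> f1 x \<le> C"
    and B3_inf: "\<exists>h c. cond_surv_version Q0 \<tau> h \<and> 0 < c \<and>
                       (AE x in \<nu>. x \<in> Xc \<longrightarrow> c \<le> f0 x * h x)"
    \<comment> \<open>[B5]\<close>
    and B5_diam: "\<exists>C. \<forall>n\<ge>1. \<forall>a\<in>A n. diameter a \<le> C * real n powr (- \<theta>)"
    and B5_meas: "\<exists>c C. 0 < c \<and> 0 < C \<and> (\<forall>n\<ge>1. \<forall>a\<in>A n.
                     c * real n powr (- (real dbar * \<theta>)) \<le> measure \<nu> a \<and>
                     measure \<nu> a \<le> C * real n powr (- (real dbar * \<theta>)))"
  shows
    "(\<forall>\<delta>' \<delta>. 0 < \<delta>' \<and> \<delta>' < \<delta> \<and> \<delta> < min (1 - real dbar * \<theta>) (1 - \<beta>) \<longrightarrow>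
        ((\<lambda>n. measure (sample_space n (p n) Q0 Q1)
            {\<omega> \<in> space (sample_space n (p n) Q0 Q1).
               \<forall>a\<in>A n. (\<Sum>i\<in>grp \<omega> n False. of_bool (Xv \<omega> i \<in> a) * Yv \<omega> i \<tau>)
                          > real n powr (1 - real dbar * \<theta> - \<delta>')}) \<longlonglongrightarrow> 1)
      \<and> ((\<lambda>n. measure (sample_space n (p n) Q0 Q1)
            {\<omega> \<in> space (sample_space n (p n) Q0 Q1).
               \<forall>a\<in>A n. (\<Sum>i\<in>grp \<omega> n True. of_bool (Xv \<omega> i \<in> a) :: real)
                          < real n powr (1 - real dbar * \<theta> - \<delta>)}) \<longlonglongrightarrow> 1))
     \<and> ((\<lambda>n. measure (sample_space n (p n) Q0 Q1)
            {\<omega> \<in> space (sample_space n (p n) Q0 Q1).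
               \<exists>i\<in>G1 (A n) \<omega> n.
                 (\<Sum>j\<in>G0 (A n) \<omega> n. of_bool (Xv \<omega> j \<in> cell (A n) (Xv \<omega> i)) * Yv \<omega> j \<tau>) = 0})
          \<longlonglongrightarrow> 0)
     \<and> (\<forall>\<epsilon>>0. (\<lambda>n. measure (sample_space n (p n) Q0 Q1)
            {\<omega> \<in> space (sample_space n (p n) Q0 Q1).
               \<exists>t\<in>{0..\<tau>}. \<exists>i\<in>G0 (A n) \<omega> n. \<bar>weight (A n) \<omega> n i t\<bar> > \<epsilon>})
          \<longlonglongrightarrow> 0)"
  proof -
  obtain cp Cp where cp: "0 < cp" and Cp: "0 < Cp"
    and pb: "\<And>n. n \<ge> 1 \<Longrightarrow> cp * real n powr (\<beta> - 1) \<le> p n \<and> p n \<le> Cp * real n powr (\<beta> - 1)"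
    using B2 by blast
  obtain C1 where C1: "AE x in \<nu>. x \<in> Xc \<longrightarrow> f1 x \<le> C1" using B3_sup by blast
  define C1' where "C1' = max C1 1"
  have C1'0: "0 \<le> C1'" unfolding C1'_def by simp
  have C1'AE: "AE x in \<nu>. x \<in> Xc \<longrightarrow> f1 x \<le> C1'"
    using C1 unfolding C1'_def by (auto elim!: eventually_mono)
  obtain h ch where hv: "cond_surv_version Q0 \<tau> h" and ch: "0 < ch"
    and hAE: "AE x in \<nu>. x \<in> Xc \<longrightarrow> ch \<le> f0 x * h x" using B3_inf by blast
  obtain cv Cv where cv: "0 < cv" and Cv: "0 < Cv"
    and mb: "\<And>n a. n \<ge> 1 \<Longrightarrow> a \<in> A n \<Longrightarrow> cv * real n powr (- (real dbar * \<theta>)) \<le> measure \<nu> a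
                 \<and> measure \<nu> a \<le> Cv * real n powr (- (real dbar * \<theta>))"
    using B5_meas by blast
  define \<alpha> where "\<alpha> = 1 - real dbar * \<theta>"
  have \<alpha>: "0 < \<alpha>" using B1 unfolding \<alpha>_def by simp
  define K where "K = measure \<nu> Xc / cv"
  have Mprob: "prob_space (sample_space n (p n) Q0 Q1)" for n
    unfolding sample_space_def
    by (rule prob_space_PiM) (rule unit_law_facts(1)[OF Q0_prob Q0_sets Q1_prob Q1_sets]; use p_range in auto)
  have aXc: "a \<subseteq> Xc" if "a \<in> A n" for a n using A_cover[of n] that by auto
  have Xcs: "Xc \<in> sets \<nu>" unfolding A_cover[of 0, symmetric] nu_sets
    using A_finite[of 0] A_meas[of _ 0] by (intro sets.finite_Union) auto
  have afin: "emeasure \<nu> a < \<infinity>" if "a \<in> A n" for a n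
  proof -
    have "emeasure \<nu> a \<le> emeasure \<nu> Xc" using aXc[OF that] Xcs by (rule emeasure_mono)
    then show ?thesis using nu_Xc by simp
  qed
  have card: "real (card (A n)) \<le> K * real n powr (real dbar * \<theta>)" if n: "n \<ge> 1" for n
  proof -
    have "real (card (A n)) * (cv * real n powr (- (real dbar * \<theta>))) \<le> measure \<nu> Xc"
      by (rule card_bound[OF A_finite _ A_disj A_cover nu_Xc]) (use A_meas nu_sets mb n in auto)
    moreover have "real n powr (- (real dbar * \<theta>)) = 1 / real n powr (real dbar * \<theta>)"
      by (simp add: powr_minus_divide)
    moreover have P: "0 < real n powr (real dbar * \<theta>)" using n by simp
    ultimately have "real (card (A n)) * cv \<le> measure \<nu> Xc * real n powr (real dbar * \<theta>)"
      by (simp add: field_simps)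
    then show ?thesis using cv unfolding K_def by (simp add: field_simps)
  qed
  have npow: "real n * real n powr (- (real dbar * \<theta>)) = real n powr \<alpha>" if "n \<ge> 1" for n
    using that unfolding \<alpha>_def by (simp add: powr_diff powr_minus_divide)
  have pev: "eventually (\<lambda>n. p n \<le> 1/2) sequentially"
  proof -
    have "(\<lambda>n. real n powr (\<beta> - 1)) \<longlonglongrightarrow> 0"
      by (rule tendsto_neg_powr) (use B1 filterlim_real_sequentially in auto)
    then have "(\<lambda>n. Cp * real n powr (\<beta> - 1)) \<longlonglongrightarrow> 0"
      using tendsto_mult_right_zero by blast
    then have "eventually (\<lambda>n. Cp * real n powr (\<beta> - 1) < 1/2) sequentially"
      by (rule order_tendstoD) simp
    then show ?thesis using eventually_ge_at_top[of 1]
      by eventually_elim (use pb in force)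
  qed
  define b where "b = 1 - exp (-1::real)"
  have b: "0 < b" unfolding b_def by simp
  define Ev1 where "Ev1 \<delta>' n = {\<omega> \<in> space (sample_space n (p n) Q0 Q1).
      \<forall>a\<in>A n. (\<Sum>i\<in>grp \<omega> n False. of_bool (Xv \<omega> i \<in> a) * Yv \<omega> i \<tau>) > real n powr (1 - real dbar * \<theta> - \<delta>')}" for \<delta>' n
  have Ev1_sets: "Ev1 \<delta>' n \<in> sets (sample_space n (p n) Q0 Q1)" for \<delta>' n
    unfolding Ev1_def
    by (rule prob_all_ge(1)[where r=1, OF Mprob A_finite], rule cell_event0(1)[OF Q0_prob Q0_sets Q1_prob Q1_sets _ _ A_meas])
       (use p_range prob_space.prob_le_1[OF Mprob] in auto)
  have Ev1_lower: "1 - K * (real n powr (real dbar * \<theta>) * exp (1 * real n powr (\<alpha> - \<delta>') - (b * (ch * cv / 2)) * real n powr \<alpha>))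
        \<le> measure (sample_space n (p n) Q0 Q1) (Ev1 \<delta>' n)" if n: "n \<ge> 1" and pn: "p n \<le> 1/2" for \<delta>' n
  proof -
    define r where "r = exp (1 * real n powr (\<alpha> - \<delta>') - (b * (ch * cv / 2)) * real n powr \<alpha>)"
    have cellb: "measure (sample_space n (p n) Q0 Q1) {\<omega> \<in> space (sample_space n (p n) Q0 Q1).
        \<not> (real n powr (1 - real dbar * \<theta> - \<delta>') < (\<Sum>i\<in>grp \<omega> n False. of_bool (Xv \<omega> i \<in> a) * Yv \<omega> i \<tau>))} \<le> r"
      if a: "a \<in> A n" for a
    proof -
      let ?m = "measure Q0 {v \<in> space Q0. fst v \<in> a \<and> \<tau> \<le> min (fst (snd v)) (snd (snd v))}"
      have m: "ch * measure \<nu> a \<le> ?m"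
        by (rule q0_lower[OF Q0_prob Q0_sets nu_sets f0_meas dens0 hv ch hAE A_meas[OF a] aXc[OF a]])
      have "ch * (cv * real n powr (- (real dbar * \<theta>))) \<le> ch * measure \<nu> a"
        using mb[OF n a] ch by (intro mult_left_mono) auto
      then have m2: "ch * cv * real n powr (- (real dbar * \<theta>)) \<le> ?m" using m by (simp add: mult.assoc)
      have "(ch * cv / 2) * real n powr \<alpha> = real n * ((1/2) * (ch * cv * real n powr (- (real dbar * \<theta>))))"
        using npow[OF n] by (simp add: algebra_simps)
      also have "\<dots> \<le> real n * ((1 - p n) * ?m)"
      proof (intro mult_left_mono mult_mono)
        show "0 \<le> ch * cv * real n powr (- (real dbar * \<theta>))" using ch cv by simp
      qed (use m2 pn in auto)
      finally have key: "b * ((ch * cv / 2) * real n powr \<alpha>) \<le> b * (real n * ((1 - p n) * ?m))"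
        using b by (intro mult_left_mono) auto
      have "measure (sample_space n (p n) Q0 Q1) {\<omega> \<in> space (sample_space n (p n) Q0 Q1).
        \<not> (real n powr (1 - real dbar * \<theta> - \<delta>') < (\<Sum>i\<in>grp \<omega> n False. of_bool (Xv \<omega> i \<in> a) * Yv \<omega> i \<tau>))}
         \<le> exp (real n powr (1 - real dbar * \<theta> - \<delta>') - (1 - exp (-1)) * real n * ((1 - p n) * ?m))"
        by (rule cell_event0(2)[OF Q0_prob Q0_sets Q1_prob Q1_sets _ _ A_meas[OF a]]) (use p_range in auto)
      also have "\<dots> \<le> r" unfolding r_def
        using key unfolding b_def[symmetric] \<alpha>_def by (simp add: mult.assoc)
      finally show ?thesis .
    qed
    have "1 - real (card (A n)) * r \<le> measure (sample_space n (p n) Q0 Q1) (Ev1 \<delta>' n)"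
      unfolding Ev1_def
    proof (rule prob_all_ge(2)[OF Mprob A_finite])
      fix a assume a: "a \<in> A n"
      show "{\<omega> \<in> space (sample_space n (p n) Q0 Q1).
        \<not> (real n powr (1 - real dbar * \<theta> - \<delta>') < (\<Sum>i\<in>grp \<omega> n False. of_bool (Xv \<omega> i \<in> a) * Yv \<omega> i \<tau>))}
         \<in> sets (sample_space n (p n) Q0 Q1)"
        by (rule cell_event0(1)[OF Q0_prob Q0_sets Q1_prob Q1_sets _ _ A_meas[OF a]]) (use p_range in auto)
      show "measure (sample_space n (p n) Q0 Q1) {\<omega> \<in> space (sample_space n (p n) Q0 Q1).
        \<not> (real n powr (1 - real dbar * \<theta> - \<delta>') < (\<Sum>i\<in>grp \<omega> n False. of_bool (Xv \<omega> i \<in> a) * Yv \<omega> i \<tau>))} \<le> r"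
        by (rule cellb[OF a])
    qed
    moreover have "real (card (A n)) * r \<le> K * real n powr (real dbar * \<theta>) * r"
      using card[OF n] by (intro mult_right_mono) (auto simp: r_def)
    ultimately show ?thesis unfolding r_def[symmetric] by (simp only: mult.assoc)
  qed
  have Ev1_lim: "(\<lambda>n. measure (sample_space n (p n) Q0 Q1) (Ev1 \<delta>' n)) \<longlonglongrightarrow> 1" if d: "0 < \<delta>'" "\<delta>' < \<alpha>" for \<delta>'
  proof -
    have L: "(\<lambda>n. real n powr (real dbar * \<theta>) * exp (1 * real n powr (\<alpha> - \<delta>') - (b * (ch * cv / 2)) * real n powr \<alpha>)) \<longlonglongrightarrow> 0"
      by (rule lim_gen) (use \<alpha> b ch cv d in auto)
    have L2: "(\<lambda>n. 1 - K * (real n powr (real dbar * \<theta>) * exp (1 * real n powr (\<alpha> - \<delta>') - (b * (ch * cv / 2)) * real n powr \<alpha>))) \<longlonglongrightarrow> 1 - K * 0"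
      by (intro tendsto_intros L)
    show ?thesis
    proof (rule tendsto_sandwich[OF _ _ L2[unfolded mult_zero_right diff_zero] tendsto_const])
      show "eventually (\<lambda>n. 1 - K * (real n powr (real dbar * \<theta>) * exp (1 * real n powr (\<alpha> - \<delta>') - (b * (ch * cv / 2)) * real n powr \<alpha>))
          \<le> measure (sample_space n (p n) Q0 Q1) (Ev1 \<delta>' n)) sequentially"
        using pev eventually_ge_at_top[of 1] by eventually_elim (rule Ev1_lower)
      show "eventually (\<lambda>n. measure (sample_space n (p n) Q0 Q1) (Ev1 \<delta>' n) \<le> 1) sequentially"
        using prob_space.prob_le_1[OF Mprob] by simp
    qed
  qed
  define d2 where "d2 = (exp 1 - 1) * (Cp * (C1' * Cv))"
  have d2: "0 \<le> d2" unfolding d2_def using Cp Cv C1'0 by simp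
  define Ev2 where "Ev2 \<delta> n = {\<omega> \<in> space (sample_space n (p n) Q0 Q1).
      \<forall>a\<in>A n. (\<Sum>i\<in>grp \<omega> n True. of_bool (Xv \<omega> i \<in> a) :: real) < real n powr (1 - real dbar * \<theta> - \<delta>)}" for \<delta> n
  have Ev2_sets: "Ev2 \<delta> n \<in> sets (sample_space n (p n) Q0 Q1)" for \<delta> n
    unfolding Ev2_def
    by (rule prob_all_ge(1)[where r=1, OF Mprob A_finite], rule cell_event1(1)[OF Q0_prob Q0_sets Q1_prob Q1_sets _ _ A_meas])
       (use p_range prob_space.prob_le_1[OF Mprob] in auto)
  have Ev2_lower: "1 - K * (real n powr (real dbar * \<theta>) * exp (d2 * real n powr ((\<alpha> - \<delta>) - (1 - \<beta> - \<delta>)) - 1 * real n powr (\<alpha> - \<delta>)))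
        \<le> measure (sample_space n (p n) Q0 Q1) (Ev2 \<delta> n)" if n: "n \<ge> 1" for \<delta> n
  proof -
    define r where "r = exp (d2 * real n powr ((\<alpha> - \<delta>) - (1 - \<beta> - \<delta>)) - 1 * real n powr (\<alpha> - \<delta>))"
    have cellb: "measure (sample_space n (p n) Q0 Q1) {\<omega> \<in> space (sample_space n (p n) Q0 Q1).
        \<not> ((\<Sum>i\<in>grp \<omega> n True. of_bool (Xv \<omega> i \<in> a) :: real) < real n powr (1 - real dbar * \<theta> - \<delta>))} \<le> r"
      if a: "a \<in> A n" for a
    proof -
      let ?m = "measure Q1 {v \<in> space Q1. fst v \<in> a}"
      have m: "?m \<le> C1' * measure \<nu> a"
        by (rule q1_upper[OF Q1_prob Q1_sets nu_sets f1_meas dens1 C1'0 C1'AE A_meas[OF a] aXc[OF a] afin[OF a]])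
      have "C1' * measure \<nu> a \<le> C1' * (Cv * real n powr (- (real dbar * \<theta>)))"
        using mb[OF n a] C1'0 by (intro mult_left_mono) auto
      then have m2: "?m \<le> C1' * (Cv * real n powr (- (real dbar * \<theta>)))" using m by linarith
      have "p n * ?m \<le> (Cp * real n powr (\<beta> - 1)) * (C1' * (Cv * real n powr (- (real dbar * \<theta>))))"
        by (intro mult_mono m2) (use pb[OF n] Cp in auto)
      then have "real n * (p n * ?m) \<le> real n * ((Cp * real n powr (\<beta> - 1)) * (C1' * (Cv * real n powr (- (real dbar * \<theta>)))))"
        by (intro mult_left_mono) auto
      also have "\<dots> = (Cp * (C1' * Cv)) * (real n powr (\<beta> - 1) * (real n * real n powr (- (real dbar * \<theta>))))"
        by (simp add: algebra_simps)
      also have "\<dots> = (Cp * (C1' * Cv)) * real n powr ((\<alpha> - \<delta>) - (1 - \<beta> - \<delta>))"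
      proof -
        have e: "(\<alpha> - \<delta>) - (1 - \<beta> - \<delta>) = (\<beta> - 1) + \<alpha>" by simp
        show ?thesis unfolding npow[OF n] e powr_add by simp
      qed
      finally have key0: "real n * (p n * ?m) \<le> (Cp * (C1' * Cv)) * real n powr ((\<alpha> - \<delta>) - (1 - \<beta> - \<delta>))" .
      have key: "(exp 1 - 1) * real n * (p n * ?m) \<le> d2 * real n powr ((\<alpha> - \<delta>) - (1 - \<beta> - \<delta>))"
        using mult_left_mono[OF key0, of "exp 1 - 1"] unfolding d2_def by (simp add: mult.assoc)
      have "measure (sample_space n (p n) Q0 Q1) {\<omega> \<in> space (sample_space n (p n) Q0 Q1).
        \<not> ((\<Sum>i\<in>grp \<omega> n True. of_bool (Xv \<omega> i \<in> a) :: real) < real n powr (1 - real dbar * \<theta> - \<delta>))}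
         \<le> exp (- (real n powr (1 - real dbar * \<theta> - \<delta>)) + (exp 1 - 1) * real n * (p n * ?m))"
        by (rule cell_event1(2)[OF Q0_prob Q0_sets Q1_prob Q1_sets _ _ A_meas[OF a]]) (use p_range in auto)
      also have "\<dots> \<le> r" unfolding r_def
        using key unfolding \<alpha>_def by simp
      finally show ?thesis .
    qed
    have "1 - real (card (A n)) * r \<le> measure (sample_space n (p n) Q0 Q1) (Ev2 \<delta> n)"
      unfolding Ev2_def
    proof (rule prob_all_ge(2)[OF Mprob A_finite])
      fix a assume a: "a \<in> A n"
      show "{\<omega> \<in> space (sample_space n (p n) Q0 Q1).
        \<not> ((\<Sum>i\<in>grp \<omega> n True. of_bool (Xv \<omega> i \<in> a) :: real) < real n powr (1 - real dbar * \<theta> - \<delta>))}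
         \<in> sets (sample_space n (p n) Q0 Q1)"
        by (rule cell_event1(1)[OF Q0_prob Q0_sets Q1_prob Q1_sets _ _ A_meas[OF a]]) (use p_range in auto)
      show "measure (sample_space n (p n) Q0 Q1) {\<omega> \<in> space (sample_space n (p n) Q0 Q1).
        \<not> ((\<Sum>i\<in>grp \<omega> n True. of_bool (Xv \<omega> i \<in> a) :: real) < real n powr (1 - real dbar * \<theta> - \<delta>))} \<le> r"
        by (rule cellb[OF a])
    qed
    moreover have "real (card (A n)) * r \<le> K * real n powr (real dbar * \<theta>) * r"
      using card[OF n] by (intro mult_right_mono) (auto simp: r_def)
    ultimately show ?thesis unfolding r_def[symmetric] by (simp only: mult.assoc)
  qed
  have Ev2_lim: "(\<lambda>n. measure (sample_space n (p n) Q0 Q1) (Ev2 \<delta> n)) \<longlonglongrightarrow> 1"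
    if d: "0 < \<delta>" "\<delta> < \<alpha>" "\<delta> < 1 - \<beta>" for \<delta>
  proof -
    have L: "(\<lambda>n. real n powr (real dbar * \<theta>) * exp (d2 * real n powr ((\<alpha> - \<delta>) - (1 - \<beta> - \<delta>)) - 1 * real n powr (\<alpha> - \<delta>))) \<longlonglongrightarrow> 0"
      by (rule lim_gen) (use d2 d in auto)
    have L2: "(\<lambda>n. 1 - K * (real n powr (real dbar * \<theta>) * exp (d2 * real n powr ((\<alpha> - \<delta>) - (1 - \<beta> - \<delta>)) - 1 * real n powr (\<alpha> - \<delta>)))) \<longlonglongrightarrow> 1 - K * 0"
      by (intro tendsto_intros L)
    show ?thesis
    proof (rule tendsto_sandwich[OF _ _ L2[unfolded mult_zero_right diff_zero] tendsto_const])
      show "eventually (\<lambda>n. 1 - K * (real n powr (real dbar * \<theta>) * exp (d2 * real n powr ((\<alpha> - \<delta>) - (1 - \<beta> - \<delta>)) - 1 * real n powr (\<alpha> - \<delta>)))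
          \<le> measure (sample_space n (p n) Q0 Q1) (Ev2 \<delta> n)) sequentially"
        using eventually_ge_at_top[of 1] by eventually_elim (rule Ev2_lower)
      show "eventually (\<lambda>n. measure (sample_space n (p n) Q0 Q1) (Ev2 \<delta> n) \<le> 1) sequentially"
        using prob_space.prob_le_1[OF Mprob] by simp
    qed
  qed
  define m where "m = min \<alpha> (1 - \<beta>)"
  have m: "0 < m" "m \<le> \<alpha>" "m \<le> 1 - \<beta>" using \<alpha> B1 unfolding m_def by auto
  define d0 where "d0 = m / 2"
  define d0' where "d0' = m / 4"
  have d0: "0 < d0" "d0 < \<alpha>" "d0 < 1 - \<beta>" using m unfolding d0_def by auto
  have d0': "0 < d0'" "d0' < \<alpha>" "d0' < d0" using m unfolding d0'_def d0_def by auto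
  have part1: "\<forall>\<delta>' \<delta>. 0 < \<delta>' \<and> \<delta>' < \<delta> \<and> \<delta> < min (1 - real dbar * \<theta>) (1 - \<beta>) \<longrightarrow>
        ((\<lambda>n. measure (sample_space n (p n) Q0 Q1)
            {\<omega> \<in> space (sample_space n (p n) Q0 Q1).
               \<forall>a\<in>A n. (\<Sum>i\<in>grp \<omega> n False. of_bool (Xv \<omega> i \<in> a) * Yv \<omega> i \<tau>)
                          > real n powr (1 - real dbar * \<theta> - \<delta>')}) \<longlonglongrightarrow> 1)
      \<and> ((\<lambda>n. measure (sample_space n (p n) Q0 Q1)
            {\<omega> \<in> space (sample_space n (p n) Q0 Q1).
               \<forall>a\<in>A n. (\<Sum>i\<in>grp \<omega> n True. of_bool (Xv \<omega> i \<in> a) :: real)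
                          < real n powr (1 - real dbar * \<theta> - \<delta>)}) \<longlonglongrightarrow> 1)"
  proof (intro allI impI conjI)
    fix \<delta>' \<delta> :: real assume H: "0 < \<delta>' \<and> \<delta>' < \<delta> \<and> \<delta> < min (1 - real dbar * \<theta>) (1 - \<beta>)"
    show "(\<lambda>n. measure (sample_space n (p n) Q0 Q1)
            {\<omega> \<in> space (sample_space n (p n) Q0 Q1).
               \<forall>a\<in>A n. (\<Sum>i\<in>grp \<omega> n False. of_bool (Xv \<omega> i \<in> a) * Yv \<omega> i \<tau>)
                          > real n powr (1 - real dbar * \<theta> - \<delta>')}) \<longlonglongrightarrow> 1"
      by (rule Ev1_lim[unfolded Ev1_def]) (use H in \<open>auto simp: \<alpha>_def\<close>)
    show "(\<lambda>n. measure (sample_space n (p n) Q0 Q1)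
            {\<omega> \<in> space (sample_space n (p n) Q0 Q1).
               \<forall>a\<in>A n. (\<Sum>i\<in>grp \<omega> n True. of_bool (Xv \<omega> i \<in> a) :: real)
                          < real n powr (1 - real dbar * \<theta> - \<delta>)}) \<longlonglongrightarrow> 1"
      by (rule Ev2_lim[unfolded Ev2_def]) (use H in \<open>auto simp: \<alpha>_def\<close>)
  qed
  have part3: "(\<lambda>n. measure (sample_space n (p n) Q0 Q1)
            {\<omega> \<in> space (sample_space n (p n) Q0 Q1).
               \<exists>i\<in>G1 (A n) \<omega> n.
                 (\<Sum>j\<in>G0 (A n) \<omega> n. of_bool (Xv \<omega> j \<in> cell (A n) (Xv \<omega> i)) * Yv \<omega> j \<tau>) = 0})
          \<longlonglongrightarrow> 0"
  proof -
    have L0: "(\<lambda>n. (1 - measure (sample_space n (p n) Q0 Q1) (Ev1 d0' n)) + (1 - measure (sample_space n (p n) Q0 Q1) (Ev1 d0' n))) \<longlonglongrightarrow> (1 - 1) + (1 - 1)"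
      using Ev1_lim[OF d0'(1,2)] by (intro tendsto_intros)
    have L: "(\<lambda>n. (1 - measure (sample_space n (p n) Q0 Q1) (Ev1 d0' n)) + (1 - measure (sample_space n (p n) Q0 Q1) (Ev1 d0' n))) \<longlonglongrightarrow> 0"
      using L0 by simp
    show ?thesis
    proof (rule tendsto_sandwich[OF _ _ tendsto_const L])
      show "eventually (\<lambda>n. 0 \<le> measure (sample_space n (p n) Q0 Q1)
            {\<omega> \<in> space (sample_space n (p n) Q0 Q1).
               \<exists>i\<in>G1 (A n) \<omega> n.
                 (\<Sum>j\<in>G0 (A n) \<omega> n. of_bool (Xv \<omega> j \<in> cell (A n) (Xv \<omega> i)) * Yv \<omega> j \<tau>) = 0}) sequentially"
        by simp
      show "eventually (\<lambda>n. measure (sample_space n (p n) Q0 Q1)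
            {\<omega> \<in> space (sample_space n (p n) Q0 Q1).
               \<exists>i\<in>G1 (A n) \<omega> n.
                 (\<Sum>j\<in>G0 (A n) \<omega> n. of_bool (Xv \<omega> j \<in> cell (A n) (Xv \<omega> i)) * Yv \<omega> j \<tau>) = 0}
          \<le> (1 - measure (sample_space n (p n) Q0 Q1) (Ev1 d0' n)) + (1 - measure (sample_space n (p n) Q0 Q1) (Ev1 d0' n))) sequentially"
      proof (rule always_eventually, rule allI, rule measure_le_two_compl[OF Mprob Ev1_sets Ev1_sets])
        fix n
        show "{\<omega> \<in> space (sample_space n (p n) Q0 Q1).
               \<exists>i\<in>G1 (A n) \<omega> n.
                 (\<Sum>j\<in>G0 (A n) \<omega> n. of_bool (Xv \<omega> j \<in> cell (A n) (Xv \<omega> i)) * Yv \<omega> j \<tau>) = 0}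
          \<subseteq> (space (sample_space n (p n) Q0 Q1) - Ev1 d0' n) \<union> (space (sample_space n (p n) Q0 Q1) - Ev1 d0' n)"
        proof
          fix \<omega> assume "\<omega> \<in> {\<omega> \<in> space (sample_space n (p n) Q0 Q1).
               \<exists>i\<in>G1 (A n) \<omega> n.
                 (\<Sum>j\<in>G0 (A n) \<omega> n. of_bool (Xv \<omega> j \<in> cell (A n) (Xv \<omega> i)) * Yv \<omega> j \<tau>) = 0}"
          then obtain i where sp: "\<omega> \<in> space (sample_space n (p n) Q0 Q1)" and i: "i \<in> G1 (A n) \<omega> n"
            and z: "(\<Sum>j\<in>G0 (A n) \<omega> n. of_bool (Xv \<omega> j \<in> cell (A n) (Xv \<omega> i)) * Yv \<omega> j \<tau>) = 0"
            by blast
          show "\<omega> \<in> (space (sample_space n (p n) Q0 Q1) - Ev1 d0' n) \<union> (space (sample_space n (p n) Q0 Q1) - Ev1 d0' n)"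
          proof (rule ccontr)
            assume "\<omega> \<notin> (space (sample_space n (p n) Q0 Q1) - Ev1 d0' n) \<union> (space (sample_space n (p n) Q0 Q1) - Ev1 d0' n)"
            then have e: "\<omega> \<in> Ev1 d0' n" using sp by blast
            have "(\<Sum>j\<in>G0 (A n) \<omega> n. of_bool (Xv \<omega> j \<in> cell (A n) (Xv \<omega> i)) * Yv \<omega> j \<tau>) \<noteq> 0"
              by (rule pw3[OF A_disj i _ powr_ge_zero]) (use e in \<open>auto simp: Ev1_def\<close>)
            then show False using z by simp
          qed
        qed
      qed
    qed
  qed
  have part4: "\<forall>\<epsilon>>0. (\<lambda>n. measure (sample_space n (p n) Q0 Q1)
            {\<omega> \<in> space (sample_space n (p n) Q0 Q1).
               \<exists>t\<in>{0..\<tau>}. \<exists>i\<in>G0 (A n) \<omega> n. \<bar>weight (A n) \<omega> n i t\<bar> > \<epsilon>})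
          \<longlonglongrightarrow> 0"
  proof (intro allI impI)
    fix \<epsilon> :: real assume \<epsilon>: "\<epsilon> > 0"
    have L0: "(\<lambda>n. (1 - measure (sample_space n (p n) Q0 Q1) (Ev1 d0' n)) + (1 - measure (sample_space n (p n) Q0 Q1) (Ev2 d0 n))) \<longlonglongrightarrow> (1 - 1) + (1 - 1)"
      using Ev1_lim[OF d0'(1,2)] Ev2_lim[OF d0] by (intro tendsto_intros)
    have L: "(\<lambda>n. (1 - measure (sample_space n (p n) Q0 Q1) (Ev1 d0' n)) + (1 - measure (sample_space n (p n) Q0 Q1) (Ev2 d0 n))) \<longlonglongrightarrow> 0"
      using L0 by simp
    have "(\<lambda>n. real n powr (d0' - d0)) \<longlonglongrightarrow> 0"
      by (rule tendsto_neg_powr) (use d0' filterlim_real_sequentially in auto)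
    then have evp: "eventually (\<lambda>n. real n powr (d0' - d0) < \<epsilon>) sequentially"
      by (rule order_tendstoD) (rule \<epsilon>)
    show "(\<lambda>n. measure (sample_space n (p n) Q0 Q1)
            {\<omega> \<in> space (sample_space n (p n) Q0 Q1).
               \<exists>t\<in>{0..\<tau>}. \<exists>i\<in>G0 (A n) \<omega> n. \<bar>weight (A n) \<omega> n i t\<bar> > \<epsilon>}) \<longlonglongrightarrow> 0"
    proof (rule tendsto_sandwich[OF _ _ tendsto_const L])
      show "eventually (\<lambda>n. 0 \<le> measure (sample_space n (p n) Q0 Q1)
            {\<omega> \<in> space (sample_space n (p n) Q0 Q1).
               \<exists>t\<in>{0..\<tau>}. \<exists>i\<in>G0 (A n) \<omega> n. \<bar>weight (A n) \<omega> n i t\<bar> > \<epsilon>}) sequentially"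
        by simp
      show "eventually (\<lambda>n. measure (sample_space n (p n) Q0 Q1)
            {\<omega> \<in> space (sample_space n (p n) Q0 Q1).
               \<exists>t\<in>{0..\<tau>}. \<exists>i\<in>G0 (A n) \<omega> n. \<bar>weight (A n) \<omega> n i t\<bar> > \<epsilon>}
          \<le> (1 - measure (sample_space n (p n) Q0 Q1) (Ev1 d0' n)) + (1 - measure (sample_space n (p n) Q0 Q1) (Ev2 d0 n))) sequentially"
        using evp eventually_ge_at_top[of 1]
      proof eventually_elim
        case (elim n)
        show ?case
        proof (rule measure_le_two_compl[OF Mprob Ev1_sets Ev2_sets], rule subsetI)
          fix \<omega> assume "\<omega> \<in> {\<omega> \<in> space (sample_space n (p n) Q0 Q1).
               \<exists>t\<in>{0..\<tau>}. \<exists>i\<in>G0 (A n) \<omega> n. \<bar>weight (A n) \<omega> n i t\<bar> > \<epsilon>}"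
          then obtain t i where sp: "\<omega> \<in> space (sample_space n (p n) Q0 Q1)" and t: "t \<in> {0..\<tau>}"
            and i: "i \<in> G0 (A n) \<omega> n" and w: "\<bar>weight (A n) \<omega> n i t\<bar> > \<epsilon>"
            by blast
          show "\<omega> \<in> (space (sample_space n (p n) Q0 Q1) - Ev1 d0' n) \<union> (space (sample_space n (p n) Q0 Q1) - Ev2 d0 n)"
          proof (rule ccontr)
            assume "\<omega> \<notin> (space (sample_space n (p n) Q0 Q1) - Ev1 d0' n) \<union> (space (sample_space n (p n) Q0 Q1) - Ev2 d0 n)"
            then have e1: "\<omega> \<in> Ev1 d0' n" and e2: "\<omega> \<in> Ev2 d0 n" using sp by blast+
            have n0: "0 < real n" using elim by simp
            have "\<bar>weight (A n) \<omega> n i t\<bar> \<le> real n powr (1 - real dbar * \<theta> - d0) / real n powr (1 - real dbar * \<theta> - d0')"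
              by (rule pw4[OF A_disj i]) (use t e1 e2 n0 in \<open>auto simp: Ev1_def Ev2_def\<close>)
            also have "\<dots> = real n powr (d0' - d0)"
              by (simp add: powr_diff[symmetric])
            finally show False using elim w by simp
          qed
        qed
      qed
    qed
  qed
  show ?thesis using part1 part3 part4 by blast
qed


end
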